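(* Let $p\ge 4$ with $p\equiv 0$ or $\pm 2 \pmod 6$. Define exponents $g_{2,j},g_{3,j}\in\{1,-1\}$ for $1\le j\le p-1$ as follows: $g_{2,j}=-1$ exactly when $j\in\{p-2-6k : 0\le k\le \lfloor\tfrac{p+2}{6}\rfloor-1\}\cup\{p-3-6k: 0\le k\le\lfloor\tfrac{p-4}{6}\rfloor\}$, and $g_{2,j}=1$ otherwise; $g_{3,j}=-1$ exactly when $j\in\{p-3-6k : 0\le k\le \lfloor\tfrac{p+2}{6}\rfloor-1\}\cup\{p-4-6k: 0\le k\le\lfloor\tfrac{p-4}{6}\rfloor\}$, and $g_{3,j}=1$ otherwise (indices outside $\{1,\dots,p-1\}$ are ignored). Then the closure of the $p$-braid \[\sigma_1^{-1}\sigma_2^{-1}\cdots\sigma_{p-1}^{-1}\ \sigma_1^{g_{2,1}}\sigma_2^{g_{2,2}}\cdots\sigma_{p-1}^{g_{2,p-1}}\ \sigma_1^{g_{3,1}}\sigma_2^{g_{3,2}}\cdots\sigma_{p-1}^{g_{3,p-1}}\] is a trivial link.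
   Context: $\sigma_1,\dots,\sigma_{p-1}$ denote the standard Artin generators of the braid group $B_p$. A trivial link is a split union of unknots (an unlink). *)

theory Defs
  imports Main
begin

text \<open>Braid words: a letter i > 0 stands for sigma_i, a letter -i (i > 0) for sigma_i^{-1}.
  A word is a word in B_n if all letters have absolute value between 1 and n-1.\<close>

definition valid_letter :: "nat \<Rightarrow> int \<Rightarrow> bool" where
  "valid_letter n a \<longleftrightarrow> 1 \<le> \<bar>a\<bar> \<and> \<bar>a\<bar> \<le> int n - 1"

definition valid_word :: "nat \<Rightarrow> int list \<Rightarrow> bool" where
  "valid_word n w \<longleftrightarrow> (\<forall>a\<in>set w. valid_letter n a)"

inductive braid_rel :: "nat \<Rightarrow> int list \<Rightarrow> int list \<Rightarrow> bool" for n where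
  inv: "valid_letter n a \<Longrightarrow> braid_rel n [a, -a] []"
| comm: "valid_letter n (int i) \<Longrightarrow> valid_letter n (int j) \<Longrightarrow> \<bar>int i - int j\<bar> \<ge> 2
          \<Longrightarrow> braid_rel n [int i, int j] [int j, int i]"
| braid: "valid_letter n (int i) \<Longrightarrow> valid_letter n (int i + 1)
          \<Longrightarrow> braid_rel n [int i, int i + 1, int i] [int i + 1, int i, int i + 1]"

inductive braid_eq :: "nat \<Rightarrow> int list \<Rightarrow> int list \<Rightarrow> bool" for n where
  refl: "braid_eq n w w"
| step: "braid_rel n a b \<Longrightarrow> braid_eq n (u @ a @ v) (u @ b @ v)"
| sym: "braid_eq n w w' \<Longrightarrow> braid_eq n w' w"
| trans: "braid_eq n w w' \<Longrightarrow> braid_eq n w' w'' \<Longrightarrow> braid_eq n w w''"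

text \<open>By Markov's theorem, two braids are Markov equivalent
  iff their closures are isotopic links; we use this as the definition of the link type of
  a braid closure.\<close>
inductive markov_eq :: "nat \<times> int list \<Rightarrow> nat \<times> int list \<Rightarrow> bool" where
  group: "valid_word n w \<Longrightarrow> valid_word n w' \<Longrightarrow> braid_eq n w w'
          \<Longrightarrow> markov_eq (n, w) (n, w')"
| conj: "valid_word n (u @ v) \<Longrightarrow> markov_eq (n, u @ v) (n, v @ u)"
| stab_pos: "n \<ge> 1 \<Longrightarrow> valid_word n w \<Longrightarrow> markov_eq (n, w) (Suc n, w @ [int n])"
| stab_neg: "n \<ge> 1 \<Longrightarrow> valid_word n w \<Longrightarrow> markov_eq (n, w) (Suc n, w @ [- int n])"
| sym: "markov_eq x y \<Longrightarrow> markov_eq y x"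
| trans: "markov_eq x y \<Longrightarrow> markov_eq y z \<Longrightarrow> markov_eq x z"

text \<open>The closure of the n-braid w is a trivial link (unlink) iff it is Markov equivalent
  to the identity braid in some B_m (whose closure is the m-component unlink).\<close>
definition closure_trivial_link :: "nat \<Rightarrow> int list \<Rightarrow> bool" where
  "closure_trivial_link n w \<longleftrightarrow> (\<exists>m\<ge>1. markov_eq (n, w) (m, []))"

definition g2 :: "nat \<Rightarrow> nat \<Rightarrow> int" where
  "g2 p j = (if int j \<in> {int p - 2 - 6 * k | k. 0 \<le> k \<and> k \<le> (int p + 2) div 6 - 1}
                       \<union> {int p - 3 - 6 * k | k. 0 \<le> k \<and> k \<le> (int p - 4) div 6}
             then -1 else 1)"

definition g3 :: "nat \<Rightarrow> nat \<Rightarrow> int" where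
  "g3 p j = (if int j \<in> {int p - 3 - 6 * k | k. 0 \<le> k \<and> k \<le> (int p + 2) div 6 - 1}
                       \<union> {int p - 4 - 6 * k | k. 0 \<le> k \<and> k \<le> (int p - 4) div 6}
             then -1 else 1)"

end

theory Submission
  imports Defs
begin


lemma beq_trans[trans]: "braid_eq n x y \<Longrightarrow> braid_eq n y z \<Longrightarrow> braid_eq n x z"
  by (rule braid_eq.trans)
lemma meq_trans[trans]: "markov_eq x y \<Longrightarrow> markov_eq y z \<Longrightarrow> markov_eq x z"
  by (rule markov_eq.trans)

lemma beq_ctx: "braid_eq n w w' \<Longrightarrow> braid_eq n (u @ w @ v) (u @ w' @ v)"
proof (induction rule: braid_eq.induct)
  case (refl w) then show ?case by (rule braid_eq.refl)
next
  case (step a b u0 v0)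
  then show ?case using braid_eq.step[of n a b "u @ u0" "v0 @ v"] by simp
next
  case (sym w w') then show ?case using braid_eq.sym by blast
next
  case (trans w w' w'') then show ?case using braid_eq.trans by blast
qed

lemma beq_at: "braid_eq n w w' \<Longrightarrow> x = u @ w @ v \<Longrightarrow> y = u @ w' @ v \<Longrightarrow> braid_eq n x y"
  using beq_ctx by blast

lemma cancel: "valid_letter n x \<Longrightarrow> braid_eq n [x, -x] []"
  using braid_eq.step[OF braid_rel.inv, of n x "[]" "[]"] by simp

lemma cancel_at: "valid_letter n x \<Longrightarrow> l = u @ [x, -x] @ v \<Longrightarrow> r = u @ v \<Longrightarrow> braid_eq n l r"
  using beq_at[OF cancel] by fastforce

lemma ins_at: "valid_letter n x \<Longrightarrow> r = u @ [x, -x] @ v \<Longrightarrow> l = u @ v \<Longrightarrow> braid_eq n l r"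
  using cancel_at braid_eq.sym by blast

lemma valid_neg[simp]: "valid_letter n (-x) = valid_letter n x"
  by (simp add: valid_letter_def)

lemma flip1:
  assumes "braid_eq n [x, y] [y, x]" "valid_letter n x"
  shows "braid_eq n [-x, y] [y, -x]"
proof -
  have "braid_eq n [-x, y] [-x, y, x, -x]"
    by (rule ins_at[of n x _ "[-x,y]" "[]"]) (use assms in auto)
  also have "braid_eq n \<dots> [-x, x, y, -x]"
    by (rule beq_at[OF braid_eq.sym[OF assms(1)], of _ "[-x]" "[-x]"]) auto
  also have "braid_eq n \<dots> [y, -x]"
    by (rule cancel_at[of n "-x" _ "[]" "[y,-x]"]) (use assms in auto)
  finally show ?thesis .
qed

lemma comm_pos: "valid_letter n (int i) \<Longrightarrow> valid_letter n (int j) \<Longrightarrow> \<bar>int i - int j\<bar> \<ge> 2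
  \<Longrightarrow> braid_eq n [int i, int j] [int j, int i]"
  using braid_eq.step[OF braid_rel.comm, of n i j "[]" "[]"] by simp

lemma comm_gen:
  assumes "valid_letter n x" "valid_letter n y" "\<bar>\<bar>x\<bar> - \<bar>y\<bar>\<bar> \<ge> 2"
  shows "braid_eq n [x, y] [y, x]"
proof -
  obtain i where i: "x = int i \<or> x = - int i" by (metis abs_of_nonneg abs_of_nonpos nle_le nonneg_int_cases neg_equal_iff_equal minus_minus abs_ge_zero zabs_def)
  obtain j where j: "y = int j \<or> y = - int j" by (metis abs_of_nonneg abs_of_nonpos nle_le nonneg_int_cases neg_equal_iff_equal minus_minus abs_ge_zero zabs_def)
  have vi: "valid_letter n (int i)" using assms(1) i by auto
  have vj: "valid_letter n (int j)" using assms(2) j by auto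
  have d: "\<bar>int i - int j\<bar> \<ge> 2" using assms(3) i j by auto
  have b: "braid_eq n [int i, int j] [int j, int i]" by (rule comm_pos[OF vi vj d])
  have b2: "braid_eq n [- int i, int j] [int j, - int i]" by (rule flip1[OF b vi])
  have b3: "braid_eq n [- int j, int i] [int i, - int j]" by (rule flip1[OF braid_eq.sym[OF b] vj])
  have b4: "braid_eq n [- int j, - int i] [- int i, - int j]" by (rule flip1[OF braid_eq.sym[OF b2] vj])
  show ?thesis using i j b b2 b3 b4 braid_eq.sym by auto
qed

lemma blk_comm:
  assumes "\<forall>z\<in>set B. valid_letter n z \<and> \<bar>\<bar>z\<bar> - \<bar>y\<bar>\<bar> \<ge> 2" "valid_letter n y"
  shows "braid_eq n (B @ [y]) (y # B)"
  using assms(1)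
proof (induction B)
  case Nil then show ?case by (simp add: braid_eq.refl)
next
  case (Cons z B)
  have "braid_eq n (z # B @ [y]) (z # y # B)"
    using beq_ctx[OF Cons.IH[OF _], of "[z]" "[]"] Cons.prems by simp
  also have "braid_eq n \<dots> (y # z # B)"
    using beq_ctx[OF comm_gen[of n z y], of "[]" B] Cons.prems assms(2) by simp
  finally show ?case by simp
qed

lemma blk_at: "\<forall>z\<in>set B. valid_letter n z \<and> \<bar>\<bar>z\<bar> - \<bar>y\<bar>\<bar> \<ge> 2 \<Longrightarrow> valid_letter n y
  \<Longrightarrow> l = u @ B @ [y] @ v \<Longrightarrow> r = u @ [y] @ B @ v \<Longrightarrow> braid_eq n l r"
  using beq_at[OF blk_comm] by fastforce

lemma blk_at': "\<forall>z\<in>set B. valid_letter n z \<and> \<bar>\<bar>z\<bar> - \<bar>y\<bar>\<bar> \<ge> 2 \<Longrightarrow> valid_letter n y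
  \<Longrightarrow> l = u @ [y] @ B @ v \<Longrightarrow> r = u @ B @ [y] @ v \<Longrightarrow> braid_eq n l r"
  using blk_at braid_eq.sym by blast

lemma braid_pos:
  fixes x y :: int
  assumes "1 \<le> x" "1 \<le> y" "x \<le> int n - 1" "y \<le> int n - 1" "\<bar>x - y\<bar> = 1"
  shows "braid_eq n [x, y, x] [y, x, y]"
proof (cases "y = x + 1")
  case True
  obtain i where "x = int i" using assms(1) by (metis nonneg_int_cases order_trans zero_le_one)
  then show ?thesis using braid_eq.step[OF braid_rel.braid, of n i "[]" "[]"] assms True
    by (simp add: valid_letter_def)
next
  case False
  then have xy: "x = y + 1" using assms by auto
  obtain i where "y = int i" using assms(2) by (metis nonneg_int_cases order_trans zero_le_one)
  then show ?thesis using braid_eq.sym[OF braid_eq.step[OF braid_rel.braid, of n i "[]" "[]"]] assms xy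
    by (simp add: valid_letter_def)
qed

lemma braid_gen:
  assumes "braid_eq n [x, y, x] [y, x, y]" "valid_letter n x" "valid_letter n y"
  shows "braid_eq n [-x, y, x] [y, x, -y]" "braid_eq n [x, y, -x] [-y, x, y]"
proof -
  have "braid_eq n [-x, y, x] [-x, y, x, y, -y]"
    by (rule ins_at[of n y _ "[-x,y,x]" "[]"]) (use assms in auto)
  also have "braid_eq n \<dots> [-x, x, y, x, -y]"
    by (rule beq_at[OF braid_eq.sym[OF assms(1)], of _ "[-x]" "[-y]"]) auto
  also have "braid_eq n \<dots> [y, x, -y]"
    by (rule cancel_at[of n "-x" _ "[]" "[y,x,-y]"]) (use assms in auto)
  finally show "braid_eq n [-x, y, x] [y, x, -y]" .
  have "braid_eq n [x, y, -x] [-y, y, x, y, -x]"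
    by (rule ins_at[of n "-y" _ "[]" "[x,y,-x]"]) (use assms in auto)
  also have "braid_eq n \<dots> [-y, x, y, x, -x]"
    by (rule beq_at[OF braid_eq.sym[OF assms(1)], of _ "[-y]" "[-x]"]) auto
  also have "braid_eq n \<dots> [-y, x, y]"
    by (rule cancel_at[of n "x" _ "[-y,x,y]" "[]"]) (use assms in auto)
  finally show "braid_eq n [x, y, -x] [-y, x, y]" .
qed

definition winv :: "int list \<Rightarrow> int list" where "winv w = rev (map uminus w)"

lemma cancel_word: "valid_word n w \<Longrightarrow> braid_eq n (w @ winv w) []"
proof (induction w)
  case Nil then show ?case by (simp add: winv_def braid_eq.refl)
next
  case (Cons a w)
  have va: "valid_letter n a" using Cons.prems by (simp add: valid_word_def)
  have "braid_eq n ((a # w) @ winv (a # w)) ([a] @ [] @ [-a])"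
    using beq_ctx[OF Cons.IH, of "[a]" "[-a]"] Cons.prems by (simp add: winv_def valid_word_def)
  also have "braid_eq n \<dots> []" using cancel[OF va] by simp
  finally show ?case .
qed

lemma braid_inv:
  assumes "braid_eq n [x, y, x] [y, x, y]" "valid_letter n x" "valid_letter n y"
  shows "braid_eq n [-x, -y, -x] [-y, -x, -y]"
proof -
  have "braid_eq n [-x, -y, -x] (([-y, -x, -y] @ [y, x, y]) @ [-x, -y, -x])"
    using beq_ctx[OF braid_eq.sym[OF cancel_word[of n "[-y, -x, -y]"]], of "[]" "[-x,-y,-x]"] assms
    by (simp add: winv_def valid_word_def)
  also have "braid_eq n \<dots> ([-y, -x, -y] @ [x, y, x] @ [-x, -y, -x])"
    using beq_ctx[OF braid_eq.sym[OF assms(1)], of "[-y, -x, -y]" "[-x, -y, -x]"] by simp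
  also have "braid_eq n \<dots> ([-y, -x, -y] @ [] @ [])"
    using beq_ctx[OF cancel_word[of n "[x, y, x]"], of "[-y, -x, -y]" "[]"] assms
    by (simp add: winv_def valid_word_def)
  finally show ?thesis by simp
qed


lemma vw_simps[simp]: "valid_word n [] = True" "valid_word n (x # xs) = (valid_letter n x \<and> valid_word n xs)"
  "valid_word n (xs @ ys) = (valid_word n xs \<and> valid_word n ys)"
  by (auto simp: valid_word_def)

lemma vw_mono: "valid_word k w \<Longrightarrow> k \<le> m \<Longrightarrow> valid_word m w"
  by (auto simp: valid_word_def valid_letter_def)

lemma lc: "valid_word k B \<Longrightarrow> int k + 1 \<le> \<bar>y\<bar> \<Longrightarrow> k \<le> m
  \<Longrightarrow> \<forall>z\<in>set B. valid_letter m z \<and> 2 \<le> \<bar>\<bar>z\<bar> - \<bar>y\<bar>\<bar>"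
  by (auto simp: valid_word_def valid_letter_def)

lemma rels:
  fixes x y :: int
  assumes "1 \<le> x" "1 \<le> y" "x \<le> int n - 1" "y \<le> int n - 1" "\<bar>x - y\<bar> = 1"
  shows "braid_eq n [-x, -y, x] [y, -x, -y]" "braid_eq n [x, -y, -x] [-y, -x, y]"
    "braid_eq n [-x, y, x] [y, x, -y]" "braid_eq n [x, y, -x] [-y, x, y]"
proof -
  have vx: "valid_letter n x" "valid_letter n y" using assms by (auto simp: valid_letter_def)
  have b: "braid_eq n [x, y, x] [y, x, y]" by (rule braid_pos[OF assms])
  have bi: "braid_eq n [-x, -y, -x] [-y, -x, -y]" by (rule braid_inv[OF b vx])
  show "braid_eq n [-x, y, x] [y, x, -y]" "braid_eq n [x, y, -x] [-y, x, y]"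
    using braid_gen[OF b vx] by auto
  show "braid_eq n [-x, -y, x] [y, -x, -y]" "braid_eq n [x, -y, -x] [-y, -x, y]"
    using braid_gen[OF bi] vx by auto
qed

lemma mgroup: "braid_eq n x y \<Longrightarrow> valid_word n x \<Longrightarrow> valid_word n y \<Longrightarrow> markov_eq (n, x) (n, y)"
  by (rule markov_eq.group)
lemma mconj: "x = u @ v \<Longrightarrow> y = v @ u \<Longrightarrow> valid_word n x \<Longrightarrow> markov_eq (n, x) (n, y)"
  using markov_eq.conj by blast
lemma destab_neg: "1 \<le> m \<Longrightarrow> valid_word m w \<Longrightarrow> l = w @ [- int m] \<Longrightarrow> n = m + 1
  \<Longrightarrow> markov_eq (n, l) (m, w)"
  using markov_eq.sym[OF markov_eq.stab_neg[of m w]] by simp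
lemma destab_pos: "1 \<le> m \<Longrightarrow> valid_word m w \<Longrightarrow> l = w @ [int m] \<Longrightarrow> n = m + 1
  \<Longrightarrow> markov_eq (n, l) (m, w)"
  using markov_eq.sym[OF markov_eq.stab_pos[of m w]] by simp

lemma redA:
  assumes k: "k \<ge> 1" and abc: "c = int k" "b = int k + 1" "a = int k + 2"
    and v: "valid_word k B1" "valid_word k B2" "valid_word k B3"
  shows "markov_eq (k+3, B1@[-c,-b,-a]@B2@[-c,-b,a]@B3@[-c,b,a]) (k, B1@B2@B3)"
proof -
  let ?n = "k+3"
  have L: "valid_letter ?n a" "valid_letter ?n b" "valid_letter ?n c"
    "valid_letter (k+2) b" "valid_letter (k+2) c" "valid_letter (k+1) c"
    "valid_letter ?n (-a)" "valid_letter ?n (-b)" "valid_letter ?n (-c)"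
    "valid_letter (k+2) (-b)" "valid_letter (k+2) (-c)" "valid_letter (k+1) (-c)"
    using abc k by (auto simp: valid_letter_def)
  have V: "valid_word ?n B1" "valid_word ?n B2" "valid_word ?n B3"
    "valid_word (k+2) B1" "valid_word (k+2) B2" "valid_word (k+2) B3"
    "valid_word (k+1) B1" "valid_word (k+1) B2" "valid_word (k+1) B3"
    using v vw_mono by auto
  have ca: "\<And>B. valid_word k B \<Longrightarrow> \<forall>z\<in>set B. valid_letter ?n z \<and> 2 \<le> \<bar>\<bar>z\<bar> - \<bar>a\<bar>\<bar>"
    "\<And>B. valid_word k B \<Longrightarrow> \<forall>z\<in>set B. valid_letter ?n z \<and> 2 \<le> \<bar>\<bar>z\<bar> - \<bar>-a\<bar>\<bar>"
    "\<And>B. valid_word k B \<Longrightarrow> \<forall>z\<in>set B. valid_letter ?n z \<and> 2 \<le> \<bar>\<bar>z\<bar> - \<bar>b\<bar>\<bar>"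
    "\<And>B. valid_word k B \<Longrightarrow> \<forall>z\<in>set B. valid_letter ?n z \<and> 2 \<le> \<bar>\<bar>z\<bar> - \<bar>-b\<bar>\<bar>"
    "\<And>B. valid_word k B \<Longrightarrow> \<forall>z\<in>set B. valid_letter (k+2) z \<and> 2 \<le> \<bar>\<bar>z\<bar> - \<bar>b\<bar>\<bar>"
    "\<And>B. valid_word k B \<Longrightarrow> \<forall>z\<in>set B. valid_letter (k+2) z \<and> 2 \<le> \<bar>\<bar>z\<bar> - \<bar>-b\<bar>\<bar>"
    using abc by (auto simp: valid_word_def valid_letter_def)
  have R3: "braid_eq ?n [-a,-b,a] [b,-a,-b]" "braid_eq ?n [a,-b,-a] [-b,-a,b]"
    "braid_eq ?n [-b,-c,b] [c,-b,-c]"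
    using rels[of a b ?n] rels[of b c ?n] abc k by auto
  have R2: "braid_eq (k+2) [b,-c,-b] [-c,-b,c]"
    using rels[of b c "k+2"] abc k by auto
  have C: "braid_eq ?n [a,c] [c,a]" "braid_eq ?n [-c,-a] [-a,-c]"
    using comm_gen[of ?n a c] comm_gen[of ?n "-c" "-a"] L abc by (auto simp: valid_letter_def)
  have "markov_eq (?n, B1@[-c,-b,-a]@B2@[-c,-b,a]@B3@[-c,b,a])
                  (?n, B1@[-c,-b]@B2@[-c]@[b,-a,-b]@B3@[-c,b,a])"
  proof (rule mgroup)
    have "braid_eq ?n (B1@[-c,-b,-a]@B2@[-c,-b,a]@B3@[-c,b,a])
                       (B1@[-c,-b]@(B2@[-c])@[-a]@[-b,a]@B3@[-c,b,a])"
      by (rule blk_at'[of "B2@[-c]" ?n "-a" _ "B1@[-c,-b]"]) (use ca(2)[OF v(2)] L abc in auto)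
    also have "braid_eq ?n \<dots> (B1@[-c,-b]@B2@[-c]@[b,-a,-b]@B3@[-c,b,a])"
      by (rule beq_at[OF R3(1), of _ "B1@[-c,-b]@B2@[-c]"]) auto
    finally show "braid_eq ?n (B1@[-c,-b,-a]@B2@[-c,-b,a]@B3@[-c,b,a])
                  (B1@[-c,-b]@B2@[-c]@[b,-a,-b]@B3@[-c,b,a])" .
  qed (use V L in auto)
  also have "markov_eq \<dots> (?n, [b,a]@B1@[-c,-b]@B2@[-c]@[b,-a,-b]@B3@[-c])"
    by (rule mconj[of _ "B1@[-c,-b]@B2@[-c]@[b,-a,-b]@B3@[-c]" "[b,a]"]) (use V L in auto)
  also have "markov_eq \<dots> (?n, [b]@B1@[-c]@B2@[c,-b,-a,b,-c]@[-b]@B3@[-c])"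
  proof (rule mgroup)
    have "braid_eq ?n ([b,a]@B1@[-c,-b]@B2@[-c]@[b,-a,-b]@B3@[-c])
                       ([b]@(B1@[-c])@[a]@[-b]@B2@[-c]@[b,-a,-b]@B3@[-c])"
      by (rule blk_at'[of "B1@[-c]" ?n "a" _ "[b]"]) (use ca(1)[OF v(1)] L abc in auto)
    also have "braid_eq ?n \<dots> ([b]@B1@[-c,a]@B2@[-b]@[-c]@[b,-a,-b]@B3@[-c])"
      by (rule blk_at'[of "B2" ?n "-b" _ "[b]@B1@[-c,a]"]) (use ca(4)[OF v(2)] L in auto)
    also have "braid_eq ?n \<dots> ([b]@B1@[-c]@B2@[a]@[-b,-c,b,-a,-b]@B3@[-c])"
      by (rule blk_at'[of "B2" ?n "a" _ "[b]@B1@[-c]"]) (use ca(1)[OF v(2)] L in auto)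
    also have "braid_eq ?n \<dots> ([b]@B1@[-c]@B2@[a]@[c,-b,-c]@[-a,-b]@B3@[-c])"
      by (rule beq_at[OF R3(3), of _ "[b]@B1@[-c]@B2@[a]"]) auto
    also have "braid_eq ?n \<dots> ([b]@B1@[-c]@B2@[c,a]@[-b]@[-c,-a]@[-b]@B3@[-c])"
      by (rule beq_at[OF C(1), of _ "[b]@B1@[-c]@B2"]) auto
    also have "braid_eq ?n \<dots> ([b]@B1@[-c]@B2@[c]@[a,-b,-a]@[-c,-b]@B3@[-c])"
      by (rule beq_at[OF C(2), of _ "[b]@B1@[-c]@B2@[c,a,-b]"]) auto
    also have "braid_eq ?n \<dots> ([b]@B1@[-c]@B2@[c,-b,-a,b,-c]@[-b]@B3@[-c])"
      by (rule beq_at[OF R3(2), of _ "[b]@B1@[-c]@B2@[c]"]) auto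
    finally show "braid_eq ?n ([b,a]@B1@[-c,-b]@B2@[-c]@[b,-a,-b]@B3@[-c])
                  ([b]@B1@[-c]@B2@[c,-b,-a,b,-c]@[-b]@B3@[-c])" .
  qed (use V L in auto)
  also have "markov_eq \<dots> (?n, ([b,-c,-b]@B3@[-c]@[b]@B1@[-c]@B2@[c,-b])@[-a])"
    by (rule mconj[of _ "[b]@B1@[-c]@B2@[c,-b,-a]" "[b,-c,-b]@B3@[-c]"]) (use V L in auto)
  also have "markov_eq \<dots> (k+2, [b,-c,-b]@B3@[-c]@[b]@B1@[-c]@B2@[c,-b])"
    by (rule destab_neg) (use V L abc k in auto)
  also have "markov_eq \<dots> (k+2, B1@[-c]@B2@[c,-b,b,-c,-b]@B3@[-c,b])"
    by (rule mconj[of _ "[b,-c,-b]@B3@[-c,b]" "B1@[-c]@B2@[c,-b]"]) (use V L in auto)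
  also have "markov_eq \<dots> (k+2, B1@[-c]@B2@[-b]@B3@[-c,b])"
  proof (rule mgroup)
    have "braid_eq (k+2) (B1@[-c]@B2@[c,-b,b,-c,-b]@B3@[-c,b]) (B1@[-c]@B2@[c,-c,-b]@B3@[-c,b])"
      by (rule cancel_at[of _ "-b" _ "B1@[-c]@B2@[c]"]) (use L in auto)
    also have "braid_eq (k+2) \<dots> (B1@[-c]@B2@[-b]@B3@[-c,b])"
      by (rule cancel_at[of _ "c" _ "B1@[-c]@B2"]) (use L in auto)
    finally show "braid_eq (k+2) (B1@[-c]@B2@[c,-b,b,-c,-b]@B3@[-c,b]) (B1@[-c]@B2@[-b]@B3@[-c,b])" .
  qed (use V L in auto)
  also have "markov_eq \<dots> (k+2, [b]@B1@[-c]@B2@[-b]@B3@[-c])"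
    by (rule mconj[of _ "B1@[-c]@B2@[-b]@B3@[-c]" "[b]"]) (use V L in auto)
  also have "markov_eq \<dots> (k+2, (B1@[-c,-b])@([c]@B2@B3@[-c]))"
  proof (rule mgroup)
    have "braid_eq (k+2) ([b]@B1@[-c]@B2@[-b]@B3@[-c]) ([]@B1@[b]@[-c]@B2@[-b]@B3@[-c])"
      by (rule blk_at'[of "B1" "k+2" "b" _ "[]"]) (use ca(5)[OF v(1)] L in auto)
    also have "braid_eq (k+2) \<dots> (B1@[b,-c]@[-b]@B2@B3@[-c])"
      by (rule blk_at[of "B2" "k+2" "-b" _ "B1@[b,-c]"]) (use ca(6)[OF v(2)] L in auto)
    also have "braid_eq (k+2) \<dots> (B1@[-c,-b,c]@B2@B3@[-c])"
      by (rule beq_at[OF R2, of _ "B1"]) auto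
    finally show "braid_eq (k+2) ([b]@B1@[-c]@B2@[-b]@B3@[-c]) ((B1@[-c,-b])@([c]@B2@B3@[-c]))"
      by simp
  qed (use V L in auto)
  also have "markov_eq \<dots> (k+2, ([c]@B2@B3@[-c]@B1@[-c])@[-b])"
    by (rule mconj[of _ "B1@[-c,-b]" "[c]@B2@B3@[-c]"]) (use V L in auto)
  also have "markov_eq \<dots> (k+1, [c]@B2@B3@[-c]@B1@[-c])"
    by (rule destab_neg) (use V L abc k in auto)
  also have "markov_eq \<dots> (k+1, B2@B3@[-c]@B1@[-c,c])"
    by (rule mconj[of _ "[c]"]) (use V L in auto)
  also have "markov_eq \<dots> (k+1, B2@B3@[-c]@B1)"
    by (rule mgroup, rule cancel_at[of _ "-c" _ "B2@B3@[-c]@B1" "[]"]) (use V L in auto)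
  also have "markov_eq \<dots> (k+1, (B1@B2@B3)@[-c])"
    by (rule mconj[of _ "B2@B3@[-c]"]) (use V L in auto)
  also have "markov_eq \<dots> (k, B1@B2@B3)"
    by (rule destab_neg) (use v abc k in auto)
  finally show ?thesis .
qed

lemma redB:
  assumes k: "k \<ge> 1" and abc: "c = int k" "b = int k + 1" "a = int k + 2"
    and v: "valid_word k B1" "valid_word k B2" "valid_word k B3"
  shows "markov_eq (k+3, B1@[-c,-b,-a]@B2@[c,b,a]@B3@[c,b,-a]) (k, B1@B2@B3)"
proof -
  let ?n = "k+3"
  have L: "valid_letter ?n a" "valid_letter ?n b" "valid_letter ?n c"
    "valid_letter (k+2) b" "valid_letter (k+2) c" "valid_letter (k+1) c"
    "valid_letter ?n (-a)" "valid_letter ?n (-b)" "valid_letter ?n (-c)"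
    "valid_letter (k+2) (-b)" "valid_letter (k+2) (-c)" "valid_letter (k+1) (-c)"
    using abc k by (auto simp: valid_letter_def)
  have V: "valid_word ?n B1" "valid_word ?n B2" "valid_word ?n B3"
    "valid_word (k+2) B1" "valid_word (k+2) B2" "valid_word (k+2) B3"
    "valid_word (k+1) B1" "valid_word (k+1) B2" "valid_word (k+1) B3"
    using v vw_mono by auto
  have ca: "\<And>B. valid_word k B \<Longrightarrow> \<forall>z\<in>set B. valid_letter ?n z \<and> 2 \<le> \<bar>\<bar>z\<bar> - \<bar>a\<bar>\<bar>"
    "\<And>B. valid_word k B \<Longrightarrow> \<forall>z\<in>set B. valid_letter ?n z \<and> 2 \<le> \<bar>\<bar>z\<bar> - \<bar>-a\<bar>\<bar>"
    "\<And>B. valid_word k B \<Longrightarrow> \<forall>z\<in>set B. valid_letter ?n z \<and> 2 \<le> \<bar>\<bar>z\<bar> - \<bar>b\<bar>\<bar>"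
    "\<And>B. valid_word k B \<Longrightarrow> \<forall>z\<in>set B. valid_letter ?n z \<and> 2 \<le> \<bar>\<bar>z\<bar> - \<bar>-b\<bar>\<bar>"
    "\<And>B. valid_word k B \<Longrightarrow> \<forall>z\<in>set B. valid_letter (k+2) z \<and> 2 \<le> \<bar>\<bar>z\<bar> - \<bar>b\<bar>\<bar>"
    "\<And>B. valid_word k B \<Longrightarrow> \<forall>z\<in>set B. valid_letter (k+2) z \<and> 2 \<le> \<bar>\<bar>z\<bar> - \<bar>-b\<bar>\<bar>"
    using abc by (auto simp: valid_word_def valid_letter_def)
  have R3: "braid_eq ?n [-a,b,a] [b,a,-b]" "braid_eq ?n [a,b,-a] [-b,a,b]"
    "braid_eq ?n [-b,c,b] [c,b,-c]"
    using rels[of a b ?n] rels[of b c ?n] abc k by auto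
  have R2: "braid_eq (k+2) [-b,c,b] [c,b,-c]"
    using rels[of b c "k+2"] abc k by auto
  have C: "braid_eq ?n [a,c] [c,a]" "braid_eq ?n [-c,-a] [-a,-c]"
    using comm_gen[of ?n a c] comm_gen[of ?n "-c" "-a"] L abc by (auto simp: valid_letter_def)
  have "markov_eq (?n, B1@[-c,-b,-a]@B2@[c,b,a]@B3@[c,b,-a])
                  (?n, B1@[-c,-b]@B2@[c,b]@B3@[c,-b,a,b,-c])"
  proof (rule mgroup)
    have "braid_eq ?n (B1@[-c,-b,-a]@B2@[c,b,a]@B3@[c,b,-a])
                       (B1@[-c,-b]@(B2@[c])@[-a]@[b,a]@B3@[c,b,-a])"
      by (rule blk_at'[of "B2@[c]" ?n "-a" _ "B1@[-c,-b]"]) (use ca(2)[OF v(2)] L abc in auto)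
    also have "braid_eq ?n \<dots> (B1@[-c,-b]@B2@[c]@[b,a,-b]@B3@[c,b,-a])"
      by (rule beq_at[OF R3(1), of _ "B1@[-c,-b]@B2@[c]"]) auto
    also have "braid_eq ?n \<dots> (B1@[-c,-b]@B2@[c,b,a]@B3@[-b]@[c,b,-a])"
      by (rule blk_at'[of "B3" ?n "-b" _ "B1@[-c,-b]@B2@[c,b,a]"]) (use ca(4)[OF v(3)] L in auto)
    also have "braid_eq ?n \<dots> (B1@[-c,-b]@B2@[c,b]@B3@[a]@[-b,c,b,-a])"
      by (rule blk_at'[of "B3" ?n "a" _ "B1@[-c,-b]@B2@[c,b]"]) (use ca(1)[OF v(3)] L in auto)
    also have "braid_eq ?n \<dots> (B1@[-c,-b]@B2@[c,b]@B3@[a]@[c,b,-c]@[-a])"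
      by (rule beq_at[OF R3(3), of _ "B1@[-c,-b]@B2@[c,b]@B3@[a]"]) auto
    also have "braid_eq ?n \<dots> (B1@[-c,-b]@B2@[c,b]@B3@[c,a]@[b]@[-c,-a])"
      by (rule beq_at[OF C(1), of _ "B1@[-c,-b]@B2@[c,b]@B3"]) auto
    also have "braid_eq ?n \<dots> (B1@[-c,-b]@B2@[c,b]@B3@[c]@[a,b,-a]@[-c])"
      by (rule beq_at[OF C(2), of _ "B1@[-c,-b]@B2@[c,b]@B3@[c,a,b]"]) auto
    also have "braid_eq ?n \<dots> (B1@[-c,-b]@B2@[c,b]@B3@[c,-b,a,b,-c])"
      by (rule beq_at[OF R3(2), of _ "B1@[-c,-b]@B2@[c,b]@B3@[c]"]) auto
    finally show "braid_eq ?n (B1@[-c,-b,-a]@B2@[c,b,a]@B3@[c,b,-a])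
                  (B1@[-c,-b]@B2@[c,b]@B3@[c,-b,a,b,-c])" .
  qed (use V L in auto)
  also have "markov_eq \<dots> (?n, ([b,-c]@B1@[-c,-b]@B2@[c,b]@B3@[c,-b])@[a])"
    by (rule mconj[of _ "B1@[-c,-b]@B2@[c,b]@B3@[c,-b,a]" "[b,-c]"]) (use V L in auto)
  also have "markov_eq \<dots> (k+2, [b,-c]@B1@[-c,-b]@B2@[c,b]@B3@[c,-b])"
    by (rule destab_pos) (use V L abc k in auto)
  also have "markov_eq \<dots> (k+2, B1@[-c,-b]@B2@[c,b]@B3@[c,-b,b,-c])"
    by (rule mconj[of _ "[b,-c]"]) (use V L in auto)
  also have "markov_eq \<dots> (k+2, B1@[-c]@B2@[c,b,-c]@B3)"
  proof (rule mgroup)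
    have "braid_eq (k+2) (B1@[-c,-b]@B2@[c,b]@B3@[c,-b,b,-c]) (B1@[-c,-b]@B2@[c,b]@B3@[c,-c])"
      by (rule cancel_at[of _ "-b" _ "B1@[-c,-b]@B2@[c,b]@B3@[c]" "[-c]"]) (use L in auto)
    also have "braid_eq (k+2) \<dots> (B1@[-c,-b]@B2@[c,b]@B3)"
      by (rule cancel_at[of _ "c" _ "B1@[-c,-b]@B2@[c,b]@B3" "[]"]) (use L in auto)
    also have "braid_eq (k+2) \<dots> (B1@[-c]@B2@[-b]@[c,b]@B3)"
      by (rule blk_at'[of "B2" "k+2" "-b" _ "B1@[-c]"]) (use ca(6)[OF v(2)] L in auto)
    also have "braid_eq (k+2) \<dots> (B1@[-c]@B2@[c,b,-c]@B3)"
      by (rule beq_at[OF R2, of _ "B1@[-c]@B2"]) auto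
    finally show "braid_eq (k+2) (B1@[-c,-b]@B2@[c,b]@B3@[c,-b,b,-c]) (B1@[-c]@B2@[c,b,-c]@B3)" .
  qed (use V L in auto)
  also have "markov_eq \<dots> (k+2, ([-c]@B3@B1@[-c]@B2@[c])@[b])"
    by (rule mconj[of _ "B1@[-c]@B2@[c,b]" "[-c]@B3"]) (use V L in auto)
  also have "markov_eq \<dots> (k+1, [-c]@B3@B1@[-c]@B2@[c])"
    by (rule destab_pos) (use V L abc k in auto)
  also have "markov_eq \<dots> (k+1, B3@B1@[-c]@B2@[c,-c])"
    by (rule mconj[of _ "[-c]"]) (use V L in auto)
  also have "markov_eq \<dots> (k+1, B3@B1@[-c]@B2)"
    by (rule mgroup, rule cancel_at[of _ "c" _ "B3@B1@[-c]@B2" "[]"]) (use V L in auto)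
  also have "markov_eq \<dots> (k+1, B1@[-c]@B2@B3)"
    by (rule mconj[of _ "B3"]) (use V L in auto)
  also have "markov_eq \<dots> (k+1, (B2@B3@B1)@[-c])"
    by (rule mconj[of _ "B1@[-c]"]) (use V L in auto)
  also have "markov_eq \<dots> (k, B2@B3@B1)"
    by (rule destab_neg) (use v abc k in auto)
  also have "markov_eq \<dots> (k, B1@B2@B3)"
    by (rule mconj[of _ "B2@B3"]) (use v in auto)
  finally show ?thesis .
qed



definition e1 :: "nat \<Rightarrow> int" where "e1 m = -1"
definition e2 :: "nat \<Rightarrow> int" where "e2 m = (if m mod 6 = 2 \<or> m mod 6 = 3 then -1 else 1)"
definition e3 :: "nat \<Rightarrow> int" where "e3 m = (if m mod 6 = 3 \<or> m mod 6 = 4 then -1 else 1)"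

definition row :: "(nat \<Rightarrow> int) \<Rightarrow> nat \<Rightarrow> nat \<Rightarrow> int list" where
  "row e n s = map (\<lambda>j. e (n - j + s) * int j) [1..<n]"

definition VV :: "nat \<Rightarrow> nat \<Rightarrow> int list" where
  "VV n s = row e1 n s @ row e2 n s @ row e3 n s"

lemma row_dec:
  assumes "k \<ge> 1"
  shows "row e (k+3) s = row e k (s+3) @ [e (3+s) * int k, e (2+s) * (int k + 1), e (1+s) * (int k + 2)]"
proof -
  have u: "[1..<k+3] = [1..<k] @ [k, k+1, k+2]"
    using assms upt_add_eq_append[of 1 k 3] by (simp add: upt_rec)
  have m: "map (\<lambda>j. e (k + 3 - j + s) * int j) [1..<k] = map (\<lambda>j. e (k - j + (s + 3)) * int j) [1..<k]"
  proof (rule map_cong)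
    fix x assume "x \<in> set [1..<k]"
    then have "k + 3 - x + s = k - x + (s + 3)" by simp
    then show "e (k + 3 - x + s) * int x = e (k - x + (s + 3)) * int x" by (simp only:)
  qed simp
  have t1: "map (\<lambda>j. e (k + 3 - j + s) * int j) [k, k+1, k+2] = [e (3 + s) * int k, e (2 + s) * (int k + 1), e (1 + s) * (int k + 2)]"
    by simp
  have "row e (k+3) s = map (\<lambda>j. e (k + 3 - j + s) * int j) [1..<k] @ map (\<lambda>j. e (k + 3 - j + s) * int j) [k, k+1, k+2]"
    unfolding row_def u by (rule map_append)
  also have "\<dots> = row e k (s+3) @ [e (3+s) * int k, e (2+s) * (int k + 1), e (1+s) * (int k + 2)]"
    unfolding m t1 row_def ..
  finally show ?thesis .
qed

lemma row_valid: assumes "\<forall>m. e m = 1 \<or> e m = -1" shows "valid_word n (row e n s)"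
  unfolding row_def valid_word_def
proof
  fix x assume "x \<in> set (map (\<lambda>j. e (n - j + s) * int j) [1..<n])"
  then obtain j where j: "1 \<le> j" "j < n" "x = e (n - j + s) * int j" by auto
  have "e (n - j + s) = 1 \<or> e (n - j + s) = -1" using assms by blast
  then have a: "\<bar>x\<bar> = int j" using j(3) by (elim disjE) simp_all
  show "valid_letter n x" unfolding valid_letter_def a using j(1,2) by linarith
qed

lemma e_pm: "\<forall>m. e1 m = 1 \<or> e1 m = -1" "\<forall>m. e2 m = 1 \<or> e2 m = -1" "\<forall>m. e3 m = 1 \<or> e3 m = -1"
  by (auto simp: e1_def e2_def e3_def)

lemma mrefl: "markov_eq (n, []) (n, [])"
  by (rule mgroup) (auto intro: braid_eq.refl)

lemma mainV: "n \<ge> 1 \<Longrightarrow> (s mod 6 = 0 \<and> even n \<or> s mod 6 = 3 \<and> odd n) \<Longrightarrow> \<exists>m\<ge>1. markov_eq (n, VV n s) (m, [])"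
proof (induction n arbitrary: s rule: less_induct)
  case (less n)
  have "n = 1 \<or> n = 2 \<or> n = 3 \<or> (n = (n - 3) + 3 \<and> n - 3 \<ge> 1)" using less.prems(1) by linarith
  then consider "n = 1" | "n = 2" | "n = 3" | k where "n = k + 3" "k \<ge> 1" by blast
  then show ?case
  proof cases
    case 1
    have "VV n s = []" using 1 by (simp add: VV_def row_def)
    then show ?thesis using 1 mrefl[of 1] by (intro exI[of _ 1]) simp
  next
    case 2
    then have s0: "s mod 6 = 0" using less.prems by auto
    have sm: "(Suc s) mod 6 = 1" using s0 by presburger
    have w: "VV n s = [-1, 1, 1]" using 2 sm by (simp add: VV_def row_def e1_def e2_def e3_def upt_rec)
    have "markov_eq (2, [-1,1,1]) (2, []@[int 1])"
      by (rule mgroup, rule cancel_at[of _ "-1" _ "[]" "[1]"]) (auto simp: valid_letter_def)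
    also have "markov_eq \<dots> (1, [])"
      by (rule destab_pos) auto
    finally have "markov_eq (2, [-1,1,1]) (1, [])" .
    then show ?thesis using w 2 by (intro exI[of _ 1]) simp
  next
    case 3
    then have s0: "s mod 6 = 3" using less.prems by auto
    have sm: "(Suc s) mod 6 = 4" "(Suc (Suc s)) mod 6 = 5" using s0 by presburger+
    have w: "VV n s = [-1, -2, 1, 2, 1, -2]" using 3 sm
      by (simp add: VV_def row_def e1_def e2_def e3_def upt_rec)
    have R: "braid_eq 3 [2, 1, -2] [-1, 2, 1]" using rels(4)[of 2 1 3] by simp
    have "braid_eq 3 [-1, -2, 1, 2, 1, -2] [-1, -2, 1, -1, 2, 1]"
      by (rule beq_at[OF R, of _ "[-1,-2,1]" "[]"]) auto
    also have "braid_eq 3 \<dots> [-1, -2, 2, 1]"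
      by (rule cancel_at[of _ 1 _ "[-1,-2]" "[2,1]"]) (auto simp: valid_letter_def)
    also have "braid_eq 3 \<dots> [-1, 1]"
      by (rule cancel_at[of _ "-2" _ "[-1]" "[1]"]) (auto simp: valid_letter_def)
    also have "braid_eq 3 \<dots> []"
      by (rule cancel_at[of _ "-1" _ "[]" "[]"]) (auto simp: valid_letter_def)
    finally have "markov_eq (3, [-1, -2, 1, 2, 1, -2]) (3, [])"
      by (rule mgroup) (auto simp: valid_letter_def)
    then show ?thesis using w 3 by (intro exI[of _ 3]) auto
  next
    case 4
    have vr: "valid_word k (row e1 k (s+3))" "valid_word k (row e2 k (s+3))" "valid_word k (row e3 k (s+3))"
      using row_valid e_pm by auto
    have red: "markov_eq (n, VV n s) (k, VV k (s+3))"
      using less.prems(2)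
    proof
      assume "s mod 6 = 0 \<and> even n"
      then have sm: "(3+s) mod 6 = 3" "(2+s) mod 6 = 2" "(1+s) mod 6 = 1" by presburger+
      show ?thesis
        unfolding 4 VV_def row_dec[OF 4(2)]
        using redA[OF 4(2) HOL.refl HOL.refl HOL.refl vr] sm by (simp add: e1_def e2_def e3_def)
    next
      assume "s mod 6 = 3 \<and> odd n"
      then have sm: "(3+s) mod 6 = 0" "(2+s) mod 6 = 5" "(1+s) mod 6 = 4" by presburger+
      show ?thesis
        unfolding 4 VV_def row_dec[OF 4(2)]
        using redB[OF 4(2) HOL.refl HOL.refl HOL.refl vr] sm by (simp add: e1_def e2_def e3_def)
    qed
    have par: "(s+3) mod 6 = 0 \<and> even k \<or> (s+3) mod 6 = 3 \<and> odd k"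
      using less.prems(2) 4(1) by presburger
    have "\<exists>m\<ge>1. markov_eq (k, VV k (s+3)) (m, [])"
      by (rule less.IH[OF _ 4(2) par]) (use 4 in simp)
    then obtain m where m: "m \<ge> 1" "markov_eq (k, VV k (s+3)) (m, [])" by blast
    show ?thesis by (intro exI[of _ m] conjI m(1) markov_eq.trans[OF red m(2)])
  qed
qed



lemma divbound: "(6::int) * a \<le> b \<Longrightarrow> a \<le> b div 6"
  using zdiv_mono1[of "6*a" b 6] by simp

lemma odd6: "(p::int) mod 2 = 0 \<Longrightarrow> p \<noteq> 6 * k + 3"
  by presburger

lemma aux2:
  fixes p d :: int
  assumes "1 \<le> d" "d \<le> p - 1" "p mod 2 = 0"
  shows "((\<exists>k. d = 2 + 6*k \<and> 0 \<le> k \<and> k \<le> (p+2) div 6 - 1) \<or> (\<exists>k. d = 3 + 6*k \<and> 0\<le>k \<and> k \<le> (p-4) div 6))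
         \<longleftrightarrow> (d mod 6 = 2 \<or> d mod 6 = 3)"
proof
  assume "(\<exists>k. d = 2 + 6*k \<and> 0 \<le> k \<and> k \<le> (p+2) div 6 - 1) \<or> (\<exists>k. d = 3 + 6*k \<and> 0\<le>k \<and> k \<le> (p-4) div 6)"
  then show "d mod 6 = 2 \<or> d mod 6 = 3" by auto
next
  define k where "k = d div 6"
  have dk: "d = 6 * k + d mod 6" unfolding k_def by simp
  have k0: "0 \<le> k" unfolding k_def using assms(1) by simp
  assume "d mod 6 = 2 \<or> d mod 6 = 3"
  then show "(\<exists>k. d = 2 + 6*k \<and> 0 \<le> k \<and> k \<le> (p+2) div 6 - 1) \<or> (\<exists>k. d = 3 + 6*k \<and> 0\<le>k \<and> k \<le> (p-4) div 6)"
  proof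
    assume m: "d mod 6 = 2"
    have ne: "6 * k + 3 \<noteq> p" using odd6[OF assms(3)] by metis
    have "6 * k + 3 \<le> p" using dk m assms(2) by linarith
    then have "6 * k + 3 < p" using ne by (rule le_neq_trans)
    then have "6 * k + 6 \<le> p + 2" by linarith
    then have "6 * (k+1) \<le> p + 2" by (simp add: algebra_simps)
    then have "k + 1 \<le> (p+2) div 6" by (rule divbound)
    then show ?thesis using dk m k0 by auto
  next
    assume m: "d mod 6 = 3"
    have "6 * k \<le> p - 4" using dk m assms(2) by linarith
    then have "k \<le> (p-4) div 6" by (rule divbound)
    then show ?thesis using dk m k0 by auto
  qed
qed

lemma aux3:
  fixes p d :: int
  assumes "1 \<le> d" "d \<le> p - 1" "p mod 2 = 0"
  shows "((\<exists>k. d = 3 + 6*k \<and> 0 \<le> k \<and> k \<le> (p+2) div 6 - 1) \<or> (\<exists>k. d = 4 + 6*k \<and> 0\<le>k \<and> k \<le> (p-4) div 6))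
         \<longleftrightarrow> (d mod 6 = 3 \<or> d mod 6 = 4)"
proof
  assume "(\<exists>k. d = 3 + 6*k \<and> 0 \<le> k \<and> k \<le> (p+2) div 6 - 1) \<or> (\<exists>k. d = 4 + 6*k \<and> 0\<le>k \<and> k \<le> (p-4) div 6)"
  then show "d mod 6 = 3 \<or> d mod 6 = 4" by auto
next
  define k where "k = d div 6"
  have dk: "d = 6 * k + d mod 6" unfolding k_def by simp
  have k0: "0 \<le> k" unfolding k_def using assms(1) by simp
  assume "d mod 6 = 3 \<or> d mod 6 = 4"
  then show "(\<exists>k. d = 3 + 6*k \<and> 0 \<le> k \<and> k \<le> (p+2) div 6 - 1) \<or> (\<exists>k. d = 4 + 6*k \<and> 0\<le>k \<and> k \<le> (p-4) div 6)"
  proof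
    assume m: "d mod 6 = 3"
    have "6 * k + 6 \<le> p + 2" using dk m assms(2) by linarith
    then have "6 * (k+1) \<le> p + 2" by (simp add: algebra_simps)
    then have "k + 1 \<le> (p+2) div 6" by (rule divbound)
    then show ?thesis using dk m k0 by auto
  next
    assume m: "d mod 6 = 4"
    have "6 * k \<le> p - 4" using dk m assms(2) by linarith
    then have "k \<le> (p-4) div 6" by (rule divbound)
    then show ?thesis using dk m k0 by auto
  qed
qed

lemma g2_eq: assumes "1 \<le> j" "j < p" "even p"
  shows "g2 p j = (if (p - j) mod 6 = 2 \<or> (p - j) mod 6 = 3 then -1 else 1)"
proof -
  define d where "d = int (p - j)"
  have jd: "int j = int p - d" unfolding d_def using assms by simp
  have pe: "int p mod 2 = 0" using assms(3) by presburger
  have md: "int ((p - j) mod 6) = d mod 6" unfolding d_def by (simp add: zmod_int)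
  have "(int j \<in> {int p - 2 - 6 * k | k. 0 \<le> k \<and> k \<le> (int p + 2) div 6 - 1}
                       \<union> {int p - 3 - 6 * k | k. 0 \<le> k \<and> k \<le> (int p - 4) div 6}) \<longleftrightarrow>
     ((\<exists>k. d = 2 + 6*k \<and> 0 \<le> k \<and> k \<le> (int p+2) div 6 - 1) \<or> (\<exists>k. d = 3 + 6*k \<and> 0\<le>k \<and> k \<le> (int p-4) div 6))"
  proof -
    have e1: "\<And>k. (int p - d = int p - 2 - 6*k) = (d = 2 + 6*k)" by linarith
    have e2: "\<And>k. (int p - d = int p - 3 - 6*k) = (d = 3 + 6*k)" by linarith
    show ?thesis unfolding jd Un_iff mem_Collect_eq e1 e2 ..
  qed
  also have "\<dots> \<longleftrightarrow> (d mod 6 = 2 \<or> d mod 6 = 3)"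
    by (rule aux2) (use assms pe in \<open>auto simp: d_def\<close>)
  also have "\<dots> \<longleftrightarrow> ((p - j) mod 6 = 2 \<or> (p - j) mod 6 = 3)" using md by linarith
  finally show ?thesis unfolding g2_def by simp
qed

lemma g3_eq: assumes "1 \<le> j" "j < p" "even p"
  shows "g3 p j = (if (p - j) mod 6 = 3 \<or> (p - j) mod 6 = 4 then -1 else 1)"
proof -
  define d where "d = int (p - j)"
  have jd: "int j = int p - d" unfolding d_def using assms by simp
  have pe: "int p mod 2 = 0" using assms(3) by presburger
  have md: "int ((p - j) mod 6) = d mod 6" unfolding d_def by (simp add: zmod_int)
  have "(int j \<in> {int p - 3 - 6 * k | k. 0 \<le> k \<and> k \<le> (int p + 2) div 6 - 1}
                       \<union> {int p - 4 - 6 * k | k. 0 \<le> k \<and> k \<le> (int p - 4) div 6}) \<longleftrightarrow>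
     ((\<exists>k. d = 3 + 6*k \<and> 0 \<le> k \<and> k \<le> (int p+2) div 6 - 1) \<or> (\<exists>k. d = 4 + 6*k \<and> 0\<le>k \<and> k \<le> (int p-4) div 6))"
  proof -
    have e1: "\<And>k. (int p - d = int p - 3 - 6*k) = (d = 3 + 6*k)" by linarith
    have e2: "\<And>k. (int p - d = int p - 4 - 6*k) = (d = 4 + 6*k)" by linarith
    show ?thesis unfolding jd Un_iff mem_Collect_eq e1 e2 ..
  qed
  also have "\<dots> \<longleftrightarrow> (d mod 6 = 3 \<or> d mod 6 = 4)"
    by (rule aux3) (use assms pe in \<open>auto simp: d_def\<close>)
  also have "\<dots> \<longleftrightarrow> ((p - j) mod 6 = 3 \<or> (p - j) mod 6 = 4)" using md by linarith
  finally show ?thesis unfolding g3_def by simp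
qed

theorem lemma3p4:
  fixes p :: nat
  assumes "p \<ge> 4"
    and "p mod 6 = 0 \<or> p mod 6 = 2 \<or> p mod 6 = 4"
  shows "closure_trivial_link p
           (map (\<lambda>j. - int j) [1..<p]
            @ map (\<lambda>j. g2 p j * int j) [1..<p]
            @ map (\<lambda>j. g3 p j * int j) [1..<p])"
proof -
  have ev: "even p" using assms(2) by presburger
  have r1: "map (\<lambda>j. - int j) [1..<p] = row e1 p 0" unfolding row_def e1_def by simp
  have r2: "map (\<lambda>j. g2 p j * int j) [1..<p] = row e2 p 0" unfolding row_def
  proof (rule map_cong)
    fix j assume "j \<in> set [1..<p]"
    then have j: "1 \<le> j" "j < p" by auto
    show "g2 p j * int j = e2 (p - j + 0) * int j" using g2_eq[OF j ev] by (simp add: e2_def)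
  qed simp
  have r3: "map (\<lambda>j. g3 p j * int j) [1..<p] = row e3 p 0" unfolding row_def
  proof (rule map_cong)
    fix j assume "j \<in> set [1..<p]"
    then have j: "1 \<le> j" "j < p" by auto
    show "g3 p j * int j = e3 (p - j + 0) * int j" using g3_eq[OF j ev] by (simp add: e3_def)
  qed simp
  have "\<exists>m\<ge>1. markov_eq (p, VV p 0) (m, [])"
    by (rule mainV) (use assms ev in auto)
  then show ?thesis unfolding closure_trivial_link_def r1 r2 r3 VV_def .
qed

end
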